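(* Let $\mathrm A$ be a nontrivial system of Bilocal Classical Theory (BCT) and $\rho=\sum_ip_i|i)_{\mathrm A}$ a deterministic state, with $|i)_{\mathrm A}$ the pure states and $\mathbf p=(p_i)$ a probability distribution. Then for each $k=1,2,3$, \[ S_k^{\rm reg}(\rho)=S_k(\rho)+1=H(\mathbf p)+1 . \]
   Context: BCT is an operational probabilistic theory with the following structure. Systems: a trivial system and, for every integer $D>1$, exactly one system of size $D$. For a nontrivial system $\mathrm A$ of size $D_{\mathrm A}$, every state is a nonnegative combination of the $D_{\mathrm A}$ pure states $|i)_{\mathrm A}$, which are the vertices of the simplex of deterministic states and are jointly perfectly discriminable; BCT is weakly causal (unique deterministic effect per system), classical and convex. For nontrivial $\mathrm A,\mathrm B$, the composite $\mathrm{AB}$ has size $2D_{\mathrm A}D_{\mathrm B}$, with pure states $|(ij)_s)_{\mathrm{AB}}$, $s\in\{+,-\}$, and $|i)_{\mathrm A}\boxtimes|j)_{\mathrm B}=\tfrac12\sum_{s=\pm}|(ij)_s)_{\mathrm{AB}}$; for three systems $((ij)_{s_1}k)_{s_2}=(i(jk)_{s_1s_2})_{s_1}$. Consequently $\rho^{\boxtimes N}=\sum_{\mathbf i,\mathbf s}p_{i_1}\cdots p_{i_N}2^{-(N-1)}|\mathbf i_{\mathbf s})$, with $|\mathbf i_{\mathbf s})$, $\mathbf i\in\{1,\dots,D_{\mathrm A}\}^N$, $\mathbf s\in\{\pm\}^{N-1}$, the pure states of $\mathrm A^{\boxtimes N}$. Entropies: an event is atomic if every refinement of it (collection of events from a common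 test summing to it) consists of multiples of it; an atomic observation test has only atomic effects. For a deterministic state $\sigma$, let $\mathcal P(\sigma)$ be its decompositions $\sigma=\sum_ip_i\phi_i$ into pure states, and for an atomic observation test $\{a_j\}$ let $I,J$ have joint distribution $q(i,j)=p_i(a_j|\phi_i)$. $S_1(\sigma)=\inf_{\{a_j\}}H(J)$, $S_2(\sigma)=\sup_{\mathcal P(\sigma)}\sup_{\{a_j\}}H(I:J)$, $S_3(\sigma)=\inf_{\mathcal P(\sigma)}H(I)$, and $S_k^{\rm reg}(\sigma)=\limsup_{N\to\infty}S_k(\sigma^{\boxtimes N})/N$; $H$ is Shannon entropy in base 2. *)

theory Defs
  imports "HOL-Analysis.Analysis" "HOL-Library.Extended_Real"
begin

text \<open>A classical (simplicial) system whose pure states |x) are labelled by the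
elements x of a finite carrier X. A state is a function X -> real (its coordinates
in the basis of pure states); an effect is a nonnegative function on X; the pairing
(a|sigma) is the sum over x of a x * sigma x. The unique deterministic effect is the
constant 1. No-restriction: every nonnegative family summing to 1 is a test.\<close>

definition shannon :: "'b set \<Rightarrow> ('b \<Rightarrow> real) \<Rightarrow> real" where
  "shannon A q = - (\<Sum>x\<in>A. q x * log 2 (q x))"

definition deterministic_state :: "'a set \<Rightarrow> ('a \<Rightarrow> real) \<Rightarrow> bool" where
  "deterministic_state X \<sigma> \<longleftrightarrow> (\<forall>x\<in>X. \<sigma> x \<ge> 0) \<and> (\<Sum>x\<in>X. \<sigma> x) = 1"

definition pairing :: "'a set \<Rightarrow> ('a \<Rightarrow> real) \<Rightarrow> ('a \<Rightarrow> real) \<Rightarrow> real" where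
  "pairing X a \<sigma> = (\<Sum>x\<in>X. a x * \<sigma> x)"

definition obs_test :: "'a set \<Rightarrow> nat set \<Rightarrow> (nat \<Rightarrow> 'a \<Rightarrow> real) \<Rightarrow> bool" where
  "obs_test X J a \<longleftrightarrow> finite J \<and> (\<forall>j\<in>J. \<forall>x\<in>X. a j x \<ge> 0)
      \<and> (\<forall>x\<in>X. (\<Sum>j\<in>J. a j x) = 1)"

definition atomic_event :: "'a set \<Rightarrow> ('a \<Rightarrow> real) \<Rightarrow> bool" where
  "atomic_event X e \<longleftrightarrow>
     (\<forall>J b K. obs_test X J b \<and> K \<subseteq> J \<and> (\<forall>x\<in>X. (\<Sum>k\<in>K. b k x) = e x)
        \<longrightarrow> (\<forall>k\<in>K. \<exists>c::real. \<forall>x\<in>X. b k x = c * e x))"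

definition atomic_obs_test :: "'a set \<Rightarrow> nat set \<Rightarrow> (nat \<Rightarrow> 'a \<Rightarrow> real) \<Rightarrow> bool" where
  "atomic_obs_test X J a \<longleftrightarrow> obs_test X J a \<and> (\<forall>j\<in>J. atomic_event X (a j))"

text \<open>Decomposition sigma = sum over i in I of p i * |phi i) into (normalized) pure states.\<close>
definition pure_decomp ::
  "'a set \<Rightarrow> ('a \<Rightarrow> real) \<Rightarrow> nat set \<Rightarrow> (nat \<Rightarrow> real) \<Rightarrow> (nat \<Rightarrow> 'a) \<Rightarrow> bool" where
  "pure_decomp X \<sigma> I p \<phi> \<longleftrightarrow> finite I \<and> (\<forall>i\<in>I. p i \<ge> 0 \<and> \<phi> i \<in> X)
      \<and> (\<Sum>i\<in>I. p i) = 1 \<and> (\<forall>x\<in>X. \<sigma> x = (\<Sum>i\<in>{i\<in>I. \<phi> i = x}. p i))"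

text \<open>Mutual information H(I:J) for q(i,j) = p i * (a j | phi i) = p i * a j (phi i).\<close>
definition mutual_info ::
  "nat set \<Rightarrow> (nat \<Rightarrow> real) \<Rightarrow> (nat \<Rightarrow> 'a) \<Rightarrow> nat set \<Rightarrow> (nat \<Rightarrow> 'a \<Rightarrow> real) \<Rightarrow> real" where
  "mutual_info I p \<phi> J a =
     shannon I p + shannon J (\<lambda>j. \<Sum>i\<in>I. p i * a j (\<phi> i))
     - shannon (I \<times> J) (\<lambda>(i, j). p i * a j (\<phi> i))"

definition S1 :: "'a set \<Rightarrow> ('a \<Rightarrow> real) \<Rightarrow> real" where
  "S1 X \<sigma> = Inf {shannon J (\<lambda>j. pairing X (a j) \<sigma>) | J a. atomic_obs_test X J a}"

definition S2 :: "'a set \<Rightarrow> ('a \<Rightarrow> real) \<Rightarrow> real" where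
  "S2 X \<sigma> = Sup {mutual_info I p \<phi> J a | I p \<phi> J a.
                    pure_decomp X \<sigma> I p \<phi> \<and> atomic_obs_test X J a}"

definition S3 :: "'a set \<Rightarrow> ('a \<Rightarrow> real) \<Rightarrow> real" where
  "S3 X \<sigma> = Inf {shannon I p | I p \<phi>. pure_decomp X \<sigma> I p \<phi>}"

definition S :: "nat \<Rightarrow> 'a set \<Rightarrow> ('a \<Rightarrow> real) \<Rightarrow> real" where
  "S k = (if k = 1 then S1 else if k = 2 then S2 else S3)"

text \<open>The system A^{boxtimes N} (A of size D): pure states |i_s) labelled by
i in {0..<D}^N (a list of length N) and s in {+,-}^(N-1) (a bool list of length N-1).\<close>
definition bct_power_carrier :: "nat \<Rightarrow> nat \<Rightarrow> (nat list \<times> bool list) set" where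
  "bct_power_carrier D N =
     {(is, ss). length is = N \<and> set is \<subseteq> {..<D} \<and> length ss = N - 1}"

definition bct_power :: "(nat \<Rightarrow> real) \<Rightarrow> nat \<Rightarrow> (nat list \<times> bool list) \<Rightarrow> real" where
  "bct_power p N = (\<lambda>(is, ss). prod_list (map p is) * (1/2) ^ (N - 1))"

definition S_reg :: "nat \<Rightarrow> nat \<Rightarrow> (nat \<Rightarrow> real) \<Rightarrow> ereal" where
  "S_reg k D p = limsup (\<lambda>N. ereal (S k (bct_power_carrier D N) (bct_power p N) / real N))"

end

theory Submission
  imports Defs
begin

definition hh :: "real \<Rightarrow> real" where "hh x = x * log 2 x"

lemma shannon_hh: "shannon A q = - (\<Sum>x\<in>A. hh (q x))"
  by (simp add: shannon_def hh_def)

lemma hh_0[simp]: "hh 0 = 0" by (simp add: hh_def)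

lemma hh_1[simp]: "hh 1 = 0" by (simp add: hh_def)

lemma hh_mult: "a \<ge> 0 \<Longrightarrow> b \<ge> 0 \<Longrightarrow> hh (a*b) = b * hh a + a * hh b"
proof (cases "a = 0 \<or> b = 0")
  case True then show ?thesis by auto
next
  case False
  assume "a \<ge> 0" "b \<ge> 0"
  with False have "a > 0" "b > 0" by auto
  then show ?thesis by (simp add: hh_def log_mult algebra_simps)
qed

lemma hh_nonpos: "0 \<le> c \<Longrightarrow> c \<le> 1 \<Longrightarrow> hh c \<le> 0"
proof (cases "c = 0")
  case False
  assume "0 \<le> c" "c \<le> 1"
  with False have "log 2 c \<le> 0" by simp
  with \<open>0 \<le> c\<close> show ?thesis by (simp add: hh_def mult_nonneg_nonpos)
qed simp

lemma hh_le: "0 \<le> a \<Longrightarrow> a \<le> b \<Longrightarrow> hh a \<le> a * log 2 b"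
proof (cases "a = 0")
  case False
  assume "0 \<le> a" "a \<le> b"
  with False have "a > 0" by simp
  then have "log 2 a \<le> log 2 b" using \<open>a \<le> b\<close> by (subst log_le_cancel_iff) auto
  with \<open>0 \<le> a\<close> show ?thesis by (simp add: hh_def mult_left_mono)
qed simp

lemma obs_le1:
  assumes "obs_test X J a" "j \<in> J" "w \<in> X"
  shows "a j w \<le> 1"
proof -
  have "a j w \<le> (\<Sum>j\<in>J. a j w)"
    using assms by (intro member_le_sum) (auto simp: obs_test_def)
  then show ?thesis using assms by (simp add: obs_test_def)
qed

lemma atomic_delta:
  assumes T: "obs_test X J a" and j: "j \<in> J" and at: "atomic_event X (a j)"
    and y: "y \<in> X" and z: "z \<in> X" and yz: "y \<noteq> z"
  shows "a j y = 0 \<or> a j z = 0"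
proof (rule ccontr)
  assume H: "\<not> (a j y = 0 \<or> a j z = 0)"
  define b :: "nat \<Rightarrow> _ \<Rightarrow> real" where
    "b = (\<lambda>k w. if k = 0 then (if w = y then a j w else 0)
                else if k = 1 then (if w = y then 0 else a j w) else 1 - a j w)"
  have nn: "\<And>w. w \<in> X \<Longrightarrow> 0 \<le> a j w" using T j by (auto simp: obs_test_def)
  have le1: "\<And>w. w \<in> X \<Longrightarrow> a j w \<le> 1" using obs_le1[OF T j] .
  have "obs_test X {0,1,2} b"
    unfolding obs_test_def
  proof (intro conjI ballI)
    fix k w assume "k \<in> ({0,1,2}::nat set)" "w \<in> X"
    then show "0 \<le> b k w" using nn le1 unfolding b_def by auto
  next
    fix w assume "w \<in> X"
    have "(\<Sum>k\<in>{0,1,2::nat}. b k w) = b 0 w + b 1 w + b 2 w" by simp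
    also have "\<dots> = 1" unfolding b_def by simp
    finally show "(\<Sum>k\<in>{0,1,2::nat}. b k w) = 1" .
  qed simp
  moreover have "{0,1} \<subseteq> ({0,1,2}::nat set)" by auto
  moreover have "\<forall>x\<in>X. (\<Sum>k\<in>{0,1::nat}. b k x) = a j x" unfolding b_def by simp
  ultimately have "\<forall>k\<in>{0,1}. \<exists>c::real. \<forall>x\<in>X. b k x = c * a j x"
    using at[unfolded atomic_event_def, rule_format, of "{0,1,2}" b "{0,1}"] by blast
  then obtain c where c: "\<forall>x\<in>X. b 0 x = c * a j x" by blast
  from c z yz have "0 = c * a j z" by (auto simp: b_def)
  with H have "c = 0" by auto
  with c y have "a j y = 0" by (auto simp: b_def)
  with H show False by auto
qed

lemma atomic_rep:
  assumes T: "obs_test X J a" and at: "\<forall>j\<in>J. atomic_event X (a j)" and ne: "X \<noteq> {}"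
  shows "\<exists>xj c. \<forall>j\<in>J. xj j \<in> X \<and> 0 \<le> c j \<and> c j \<le> 1 \<and>
            (\<forall>y\<in>X. a j y = (if y = xj j then c j else 0))"
proof -
  have P: "\<exists>x. x \<in> X \<and> 0 \<le> a j x \<and> a j x \<le> 1 \<and>
            (\<forall>y\<in>X. a j y = (if y = x then a j x else 0))" if j: "j \<in> J" for j
  proof (cases "\<exists>y\<in>X. a j y \<noteq> 0")
    case True
    then obtain x where x: "x \<in> X" "a j x \<noteq> 0" by blast
    have "\<forall>y\<in>X. a j y = (if y = x then a j x else 0)"
    proof
      fix y assume y: "y \<in> X"
      show "a j y = (if y = x then a j x else 0)"
      proof (cases "y = x")
        case False
        then have "a j y = 0" using atomic_delta[OF T j at[rule_format, OF j] y x(1)] x(2) by blast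
        then show ?thesis using False by simp
      qed simp
    qed
    moreover have "0 \<le> a j x" using T j x(1) unfolding obs_test_def by blast
    moreover have "a j x \<le> 1" using obs_le1[OF T j x(1)] .
    ultimately show ?thesis using x(1) by blast
  next
    case False
    obtain x where x: "x \<in> X" using ne ex_in_conv by metis
    have z: "\<forall>y\<in>X. a j y = 0" using False by simp
    show ?thesis
      by (rule exI[of _ x]) (simp add: x z)
  qed
  then have "\<forall>j\<in>J. \<exists>x. x \<in> X \<and> 0 \<le> a j x \<and> a j x \<le> 1 \<and>
            (\<forall>y\<in>X. a j y = (if y = x then a j x else 0))" by blast
  then obtain xj where xj: "\<forall>j\<in>J. xj j \<in> X \<and> 0 \<le> a j (xj j) \<and> a j (xj j) \<le> 1 \<and>
            (\<forall>y\<in>X. a j y = (if y = xj j then a j (xj j) else 0))"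
    by (rule bchoice[elim_format]) blast
  show ?thesis
    by (rule exI[of _ xj], rule exI[of _ "\<lambda>j. a j (xj j)"]) (use xj in blast)
qed

lemma delta_atomic:
  assumes "x \<in> X" shows "atomic_event X (\<lambda>w. if w = x then 1 else 0)"
  unfolding atomic_event_def
proof (intro allI impI ballI)
  fix J b K k
  assume H: "obs_test X J b \<and> K \<subseteq> J \<and> (\<forall>w\<in>X. (\<Sum>k\<in>K. b k w) = (if w = x then 1 else 0))"
    and k: "k \<in> K"
  from H have H1: "obs_test X J b" and H2: "K \<subseteq> J"
    and H3: "\<forall>w\<in>X. (\<Sum>k\<in>K. b k w) = (if w = x then 1 else 0)" by blast+
  have fK: "finite K" using H1 H2 finite_subset unfolding obs_test_def by blast
  show "\<exists>c. \<forall>w\<in>X. b k w = c * (if w = x then 1 else 0)"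
  proof (intro exI[of _ "b k x"] ballI)
    fix w assume w: "w \<in> X"
    show "b k w = b k x * (if w = x then 1 else 0)"
    proof (cases "w = x")
      case False
      then have "(\<Sum>k\<in>K. b k w) = 0" using H3 w by simp
      moreover have "\<forall>k\<in>K. 0 \<le> b k w" using H1 H2 w unfolding obs_test_def by blast
      ultimately have "b k w = 0" using fK k by (simp add: sum_nonneg_eq_0_iff)
      then show ?thesis using False by simp
    qed simp
  qed
qed

lemma det_ne:
  assumes "deterministic_state X \<sigma>" shows "X \<noteq> {}"
  using assms unfolding deterministic_state_def by auto

lemma std_test:
  assumes fin: "finite X"
  shows "\<exists>J a. atomic_obs_test X J a \<and> shannon J (\<lambda>j. pairing X (a j) \<sigma>) = shannon X \<sigma>"
proof -
  obtain f where f: "bij_betw f {0..<card X} X" using ex_bij_betw_nat_finite[OF fin] by blast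
  define a :: "nat \<Rightarrow> _ \<Rightarrow> real" where "a j = (\<lambda>w. if w = f j then 1 else 0)" for j
  have fj: "f j \<in> X" if "j \<in> {0..<card X}" for j using f that by (simp add: bij_betw_apply)
  have sumj: "(\<Sum>j\<in>{0..<card X}. g (f j)) = (\<Sum>y\<in>X. g y)" for g :: "_ \<Rightarrow> real"
    by (rule sum.reindex_bij_betw[OF f])
  have "obs_test X {0..<card X} a"
    unfolding obs_test_def
  proof (intro conjI ballI)
    fix w assume w: "w \<in> X"
    have "(\<Sum>j\<in>{0..<card X}. a j w) = (\<Sum>y\<in>X. if w = y then 1 else 0)"
      unfolding a_def using sumj[of "\<lambda>y. if w = y then 1 else 0"] by simp
    also have "\<dots> = 1" using w fin by simp
    finally show "(\<Sum>j\<in>{0..<card X}. a j w) = 1" .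
  qed (auto simp: a_def)
  moreover have "\<forall>j\<in>{0..<card X}. atomic_event X (a j)"
  proof
    fix j assume "j \<in> {0..<card X}"
    then show "atomic_event X (a j)" unfolding a_def by (rule delta_atomic[OF fj])
  qed
  moreover have "shannon {0..<card X} (\<lambda>j. pairing X (a j) \<sigma>) = shannon X \<sigma>"
  proof -
    have pj: "pairing X (a j) \<sigma> = \<sigma> (f j)" if "j \<in> {0..<card X}" for j
    proof -
      have "pairing X (a j) \<sigma> = (\<Sum>w\<in>X. if w = f j then \<sigma> w else 0)"
        unfolding pairing_def a_def by (rule sum.cong) auto
      then show ?thesis using fj[OF that] fin by simp
    qed
    have "shannon {0..<card X} (\<lambda>j. pairing X (a j) \<sigma>) = - (\<Sum>j\<in>{0..<card X}. hh (\<sigma> (f j)))"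
      unfolding shannon_hh using pj by simp
    also have "\<dots> = shannon X \<sigma>" unfolding shannon_hh using sumj[of "\<lambda>y. hh (\<sigma> y)"] by simp
    finally show ?thesis .
  qed
  ultimately show ?thesis unfolding atomic_obs_test_def by blast
qed

lemma std_decomp:
  assumes fin: "finite X" and det: "deterministic_state X \<sigma>"
  shows "\<exists>I p \<phi>. pure_decomp X \<sigma> I p \<phi> \<and> shannon I p = shannon X \<sigma>"
proof -
  obtain f where f: "bij_betw f {0..<card X} X" using ex_bij_betw_nat_finite[OF fin] by blast
  have fj: "f j \<in> X" if "j \<in> {0..<card X}" for j using f that by (simp add: bij_betw_apply)
  have sumj: "(\<Sum>j\<in>{0..<card X}. g (f j)) = (\<Sum>y\<in>X. g y)" for g :: "_ \<Rightarrow> real"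
    by (rule sum.reindex_bij_betw[OF f])
  have "pure_decomp X \<sigma> {0..<card X} (\<lambda>i. \<sigma> (f i)) f"
    unfolding pure_decomp_def
  proof (intro conjI ballI)
    fix i assume "i \<in> {0..<card X}"
    then show "0 \<le> \<sigma> (f i)" "f i \<in> X" using fj det by (auto simp: deterministic_state_def)
  next
    show "(\<Sum>i\<in>{0..<card X}. \<sigma> (f i)) = 1" using sumj[of \<sigma>] det by (simp add: deterministic_state_def)
  next
    fix x assume x: "x \<in> X"
    have "(\<Sum>i\<in>{i\<in>{0..<card X}. f i = x}. \<sigma> (f i)) = (\<Sum>i\<in>{0..<card X}. if f i = x then \<sigma> (f i) else 0)"
      by (rule sum.inter_filter) simp
    also have "\<dots> = (\<Sum>y\<in>X. if y = x then \<sigma> y else 0)" by (rule sumj)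
    also have "\<dots> = \<sigma> x" using x fin by simp
    finally show "\<sigma> x = (\<Sum>i\<in>{i\<in>{0..<card X}. f i = x}. \<sigma> (f i))" by simp
  qed simp
  moreover have "shannon {0..<card X} (\<lambda>i. \<sigma> (f i)) = shannon X \<sigma>"
    unfolding shannon_hh using sumj[of "\<lambda>y. hh (\<sigma> y)"] by simp
  ultimately show ?thesis by blast
qed

lemma rep_sum:
  assumes T: "obs_test X J a" and fin: "finite X"
    and rep: "\<forall>j\<in>J. xj j \<in> X \<and> (\<forall>y\<in>X. a j y = (if y = xj j then c j else 0))"
  shows "(\<Sum>j\<in>J. c j * F (xj j)) = (\<Sum>y\<in>X. F y)"
proof -
  have "c j * F (xj j) = (\<Sum>y\<in>X. a j y * F y)" if j: "j \<in> J" for j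
  proof -
    have "(\<Sum>y\<in>X. a j y * F y) = (\<Sum>y\<in>X. if y = xj j then c j * F y else 0)"
      by (rule sum.cong) (use rep j in auto)
    also have "\<dots> = c j * F (xj j)" using rep j fin by simp
    finally show ?thesis by simp
  qed
  then have "(\<Sum>j\<in>J. c j * F (xj j)) = (\<Sum>j\<in>J. \<Sum>y\<in>X. a j y * F y)" by (rule sum.cong[OF refl])
  also have "\<dots> = (\<Sum>y\<in>X. \<Sum>j\<in>J. a j y * F y)" by (rule sum.swap)
  also have "\<dots> = (\<Sum>y\<in>X. (\<Sum>j\<in>J. a j y) * F y)" by (simp add: sum_distrib_right)
  also have "\<dots> = (\<Sum>y\<in>X. F y)" using T unfolding obs_test_def by simp
  finally show ?thesis .
qed

lemma decomp_sum:
  assumes D: "pure_decomp X \<sigma> I p \<phi>" and fin: "finite X"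
  shows "(\<Sum>i\<in>I. p i * G (\<phi> i)) = (\<Sum>y\<in>X. \<sigma> y * G y)"
proof -
  have fI: "finite I" and sub: "\<phi> ` I \<subseteq> X" using D unfolding pure_decomp_def by auto
  have "(\<Sum>i\<in>I. p i * G (\<phi> i)) = (\<Sum>y\<in>X. \<Sum>i\<in>{i. i \<in> I \<and> \<phi> i = y}. p i * G (\<phi> i))"
    by (rule sum.group[OF fI fin sub, symmetric])
  also have "\<dots> = (\<Sum>y\<in>X. \<Sum>i\<in>{i. i \<in> I \<and> \<phi> i = y}. p i * G y)"
    by (intro sum.cong refl) auto
  also have "\<dots> = (\<Sum>y\<in>X. \<sigma> y * G y)"
  proof (rule sum.cong[OF refl])
    fix y assume y: "y \<in> X"
    have "\<sigma> y = (\<Sum>i\<in>{i\<in>I. \<phi> i = y}. p i)" using D y unfolding pure_decomp_def by blast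
    then show "(\<Sum>i\<in>{i. i \<in> I \<and> \<phi> i = y}. p i * G y) = \<sigma> y * G y"
      by (simp add: sum_distrib_right)
  qed
  finally show ?thesis .
qed

lemma S1_eq:
  assumes fin: "finite X" and det: "deterministic_state X \<sigma>"
  shows "S1 X \<sigma> = shannon X \<sigma>"
  unfolding S1_def
proof (rule cInf_eq_minimum)
  obtain J a where "atomic_obs_test X J a" "shannon J (\<lambda>j. pairing X (a j) \<sigma>) = shannon X \<sigma>"
    using std_test[OF fin] by blast
  then show "shannon X \<sigma> \<in> {shannon J (\<lambda>j. pairing X (a j) \<sigma>) | J a. atomic_obs_test X J a}"
    by (metis (mono_tags, lifting) mem_Collect_eq)
next
  fix u assume "u \<in> {shannon J (\<lambda>j. pairing X (a j) \<sigma>) | J a. atomic_obs_test X J a}"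
  then obtain J a where u: "u = shannon J (\<lambda>j. pairing X (a j) \<sigma>)" and A: "atomic_obs_test X J a"
    by blast
  have T: "obs_test X J a" and at: "\<forall>j\<in>J. atomic_event X (a j)"
    using A unfolding atomic_obs_test_def by auto
  obtain xj c where rep: "\<forall>j\<in>J. xj j \<in> X \<and> 0 \<le> c j \<and> c j \<le> 1 \<and>
            (\<forall>y\<in>X. a j y = (if y = xj j then c j else 0))"
    using atomic_rep[OF T at det_ne[OF det]] by blast
  have rep': "\<forall>j\<in>J. xj j \<in> X \<and> (\<forall>y\<in>X. a j y = (if y = xj j then c j else 0))"
    using rep by blast
  have nn: "\<And>y. y \<in> X \<Longrightarrow> 0 \<le> \<sigma> y" using det unfolding deterministic_state_def by blast
  have pj: "pairing X (a j) \<sigma> = c j * \<sigma> (xj j)" if j: "j \<in> J" for j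
  proof -
    have "pairing X (a j) \<sigma> = (\<Sum>y\<in>X. if y = xj j then c j * \<sigma> y else 0)"
      unfolding pairing_def by (rule sum.cong) (use rep j in auto)
    then show ?thesis using rep j fin by simp
  qed
  have "(\<Sum>j\<in>J. hh (pairing X (a j) \<sigma>)) = (\<Sum>j\<in>J. \<sigma> (xj j) * hh (c j) + c j * hh (\<sigma> (xj j)))"
  proof (rule sum.cong[OF refl])
    fix j assume j: "j \<in> J"
    show "hh (pairing X (a j) \<sigma>) = \<sigma> (xj j) * hh (c j) + c j * hh (\<sigma> (xj j))"
      using pj[OF j] hh_mult[of "c j" "\<sigma> (xj j)"] rep j nn by auto
  qed
  also have "\<dots> = (\<Sum>j\<in>J. \<sigma> (xj j) * hh (c j)) + (\<Sum>y\<in>X. hh (\<sigma> y))"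
    using rep_sum[OF T fin rep', of "\<lambda>y. hh (\<sigma> y)"] by (simp add: sum.distrib)
  also have "\<dots> \<le> (\<Sum>y\<in>X. hh (\<sigma> y))"
  proof -
    have "(\<Sum>j\<in>J. \<sigma> (xj j) * hh (c j)) \<le> 0"
    proof (rule sum_nonpos)
      fix j assume j: "j \<in> J"
      show "\<sigma> (xj j) * hh (c j) \<le> 0"
        using rep j nn hh_nonpos[of "c j"] by (simp add: mult_nonneg_nonpos)
    qed
    then show ?thesis by simp
  qed
  finally show "shannon X \<sigma> \<le> u" unfolding u shannon_hh by simp
qed

lemma S3_eq:
  assumes fin: "finite X" and det: "deterministic_state X \<sigma>"
  shows "S3 X \<sigma> = shannon X \<sigma>"
  unfolding S3_def
proof (rule cInf_eq_minimum)
  obtain I p \<phi> where "pure_decomp X \<sigma> I p \<phi>" "shannon I p = shannon X \<sigma>"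
    using std_decomp[OF fin det] by blast
  then show "shannon X \<sigma> \<in> {shannon I p | I p \<phi>. pure_decomp X \<sigma> I p \<phi>}"
    by (metis (mono_tags, lifting) mem_Collect_eq)
next
  fix u assume "u \<in> {shannon I p | I p \<phi>. pure_decomp X \<sigma> I p \<phi>}"
  then obtain I p \<phi> where u: "u = shannon I p" and D: "pure_decomp X \<sigma> I p \<phi>"
    by blast
  have fI: "finite I" and pn: "\<And>i. i \<in> I \<Longrightarrow> 0 \<le> p i" and ph: "\<And>i. i \<in> I \<Longrightarrow> \<phi> i \<in> X"
    and sg: "\<And>x. x \<in> X \<Longrightarrow> \<sigma> x = (\<Sum>i\<in>{i\<in>I. \<phi> i = x}. p i)"
    using D unfolding pure_decomp_def by auto
  have le: "p i \<le> \<sigma> (\<phi> i)" if i: "i \<in> I" for i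
  proof -
    have "p i \<le> (\<Sum>i'\<in>{i'\<in>I. \<phi> i' = \<phi> i}. p i')"
      by (rule member_le_sum) (use i pn fI in auto)
    then show ?thesis using sg[OF ph[OF i]] by simp
  qed
  have "(\<Sum>i\<in>I. hh (p i)) \<le> (\<Sum>i\<in>I. p i * log 2 (\<sigma> (\<phi> i)))"
    by (rule sum_mono) (use hh_le pn le in blast)
  also have "\<dots> = (\<Sum>y\<in>X. \<sigma> y * log 2 (\<sigma> y))" by (rule decomp_sum[OF D fin])
  also have "\<dots> = (\<Sum>y\<in>X. hh (\<sigma> y))" by (simp add: hh_def)
  finally show "shannon X \<sigma> \<le> u" unfolding u shannon_hh by simp
qed

lemma mi_eq:
  assumes fin: "finite X" and det: "deterministic_state X \<sigma>"
    and D: "pure_decomp X \<sigma> I p \<phi>" and A: "atomic_obs_test X J a"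
  shows "mutual_info I p \<phi> J a = shannon X \<sigma>"
proof -
  have T: "obs_test X J a" and at: "\<forall>j\<in>J. atomic_event X (a j)"
    using A unfolding atomic_obs_test_def by auto
  obtain xj c where rep: "\<forall>j\<in>J. xj j \<in> X \<and> 0 \<le> c j \<and> c j \<le> 1 \<and>
            (\<forall>y\<in>X. a j y = (if y = xj j then c j else 0))"
    using atomic_rep[OF T at det_ne[OF det]] by blast
  have rep': "\<forall>j\<in>J. xj j \<in> X \<and> (\<forall>y\<in>X. a j y = (if y = xj j then c j else 0))"
    using rep by blast
  have nn: "\<And>y. y \<in> X \<Longrightarrow> 0 \<le> \<sigma> y" using det unfolding deterministic_state_def by blast
  have fI: "finite I" and pn: "\<And>i. i \<in> I \<Longrightarrow> 0 \<le> p i" and ph: "\<And>i. i \<in> I \<Longrightarrow> \<phi> i \<in> X"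
    using D unfolding pure_decomp_def by auto
  have fJ: "finite J" and an: "\<And>j y. j \<in> J \<Longrightarrow> y \<in> X \<Longrightarrow> 0 \<le> a j y"
    and a1: "\<And>y. y \<in> X \<Longrightarrow> (\<Sum>j\<in>J. a j y) = 1"
    using T unfolding obs_test_def by auto
  have aphi: "a j (\<phi> i) = (if \<phi> i = xj j then c j else 0)" if "i \<in> I" "j \<in> J" for i j
    using rep ph that by blast
  define E where "E = (\<Sum>j\<in>J. \<sigma> (xj j) * hh (c j))"
  have q: "(\<Sum>i\<in>I. p i * a j (\<phi> i)) = c j * \<sigma> (xj j)" if j: "j \<in> J" for j
  proof -
    have "(\<Sum>i\<in>I. p i * a j (\<phi> i)) = (\<Sum>i\<in>I. p i * (\<lambda>y. if y = xj j then c j else 0) (\<phi> i))"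
      by (rule sum.cong) (use aphi j in auto)
    also have "\<dots> = (\<Sum>y\<in>X. \<sigma> y * (if y = xj j then c j else 0))" by (rule decomp_sum[OF D fin])
    also have "\<dots> = (\<Sum>y\<in>X. if y = xj j then c j * \<sigma> y else 0)" by (rule sum.cong) auto
    also have "\<dots> = c j * \<sigma> (xj j)" using rep j fin by simp
    finally show ?thesis .
  qed
  have HJ: "(\<Sum>j\<in>J. hh (\<Sum>i\<in>I. p i * a j (\<phi> i))) = E + (\<Sum>y\<in>X. hh (\<sigma> y))"
  proof -
    have "(\<Sum>j\<in>J. hh (\<Sum>i\<in>I. p i * a j (\<phi> i))) = (\<Sum>j\<in>J. \<sigma> (xj j) * hh (c j) + c j * hh (\<sigma> (xj j)))"
    proof (rule sum.cong[OF refl])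
      fix j assume j: "j \<in> J"
      show "hh (\<Sum>i\<in>I. p i * a j (\<phi> i)) = \<sigma> (xj j) * hh (c j) + c j * hh (\<sigma> (xj j))"
        using q[OF j] hh_mult[of "c j" "\<sigma> (xj j)"] rep j nn by auto
    qed
    also have "\<dots> = E + (\<Sum>y\<in>X. hh (\<sigma> y))"
      using rep_sum[OF T fin rep', of "\<lambda>y. hh (\<sigma> y)"] unfolding E_def by (simp add: sum.distrib)
    finally show ?thesis .
  qed
  have HIJ: "(\<Sum>x\<in>I \<times> J. hh ((\<lambda>(i, j). p i * a j (\<phi> i)) x)) = (\<Sum>i\<in>I. hh (p i)) + E"
  proof -
    have "(\<Sum>x\<in>I \<times> J. hh ((\<lambda>(i, j). p i * a j (\<phi> i)) x)) = (\<Sum>(i,j)\<in>I \<times> J. hh (p i * a j (\<phi> i)))"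
      by (rule sum.cong) auto
    also have "\<dots> = (\<Sum>i\<in>I. \<Sum>j\<in>J. hh (p i * a j (\<phi> i)))"
      by (rule sum.cartesian_product[symmetric])
    also have "\<dots> = (\<Sum>i\<in>I. \<Sum>j\<in>J. a j (\<phi> i) * hh (p i) + p i * hh (a j (\<phi> i)))"
      by (intro sum.cong refl hh_mult) (use pn an ph in auto)
    also have "\<dots> = (\<Sum>i\<in>I. (\<Sum>j\<in>J. a j (\<phi> i)) * hh (p i)) + (\<Sum>i\<in>I. \<Sum>j\<in>J. p i * hh (a j (\<phi> i)))"
      by (simp add: sum.distrib sum_distrib_right)
    also have "(\<Sum>i\<in>I. (\<Sum>j\<in>J. a j (\<phi> i)) * hh (p i)) = (\<Sum>i\<in>I. hh (p i))"
      by (rule sum.cong) (use a1 ph in auto)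
    also have "(\<Sum>i\<in>I. \<Sum>j\<in>J. p i * hh (a j (\<phi> i))) = (\<Sum>j\<in>J. \<Sum>i\<in>I. p i * hh (a j (\<phi> i)))"
      by (rule sum.swap)
    also have "\<dots> = E"
      unfolding E_def
    proof (rule sum.cong[OF refl])
      fix j assume j: "j \<in> J"
      have "(\<Sum>i\<in>I. p i * hh (a j (\<phi> i))) = (\<Sum>i\<in>I. p i * (\<lambda>y. if y = xj j then hh (c j) else 0) (\<phi> i))"
        by (rule sum.cong) (use aphi j in auto)
      also have "\<dots> = (\<Sum>y\<in>X. \<sigma> y * (if y = xj j then hh (c j) else 0))" by (rule decomp_sum[OF D fin])
      also have "\<dots> = (\<Sum>y\<in>X. if y = xj j then \<sigma> y * hh (c j) else 0)" by (rule sum.cong) auto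
      also have "\<dots> = \<sigma> (xj j) * hh (c j)" using rep j fin by simp
      finally show "(\<Sum>i\<in>I. p i * hh (a j (\<phi> i))) = \<sigma> (xj j) * hh (c j)" .
    qed
    finally show ?thesis .
  qed
  show ?thesis
    unfolding mutual_info_def shannon_hh HJ HIJ by simp
qed

lemma S2_eq:
  assumes fin: "finite X" and det: "deterministic_state X \<sigma>"
  shows "S2 X \<sigma> = shannon X \<sigma>"
proof -
  have "{mutual_info I p \<phi> J a | I p \<phi> J a. pure_decomp X \<sigma> I p \<phi> \<and> atomic_obs_test X J a}
        = {shannon X \<sigma>}"
  proof (rule set_eqI, rule iffI)
    fix u assume "u \<in> {mutual_info I p \<phi> J a | I p \<phi> J a. pure_decomp X \<sigma> I p \<phi> \<and> atomic_obs_test X J a}"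
    then obtain I p \<phi> J a where "u = mutual_info I p \<phi> J a" "pure_decomp X \<sigma> I p \<phi>" "atomic_obs_test X J a"
      by blast
    then show "u \<in> {shannon X \<sigma>}" using mi_eq[OF fin det] by simp
  next
    fix u assume "u \<in> {shannon X \<sigma>}"
    then have u: "u = shannon X \<sigma>" by simp
    obtain J a where A: "atomic_obs_test X J a" using std_test[OF fin] by blast
    obtain I p \<phi> where D: "pure_decomp X \<sigma> I p \<phi>" using std_decomp[OF fin det] by blast
    have "u = mutual_info I p \<phi> J a" using mi_eq[OF fin det D A] u by simp
    then show "u \<in> {mutual_info I p \<phi> J a | I p \<phi> J a. pure_decomp X \<sigma> I p \<phi> \<and> atomic_obs_test X J a}"
      using A D by blast
  qed
  then show ?thesis unfolding S2_def by simp
qed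

lemma S_eq:
  assumes fin: "finite X" and det: "deterministic_state X \<sigma>" and k: "k \<in> {1,2,3}"
  shows "S k X \<sigma> = shannon X \<sigma>"
  using k S1_eq[OF fin det] S2_eq[OF fin det] S3_eq[OF fin det] by (auto simp: S_def)

lemma sum_lists_Suc:
  fixes F :: "'b list \<Rightarrow> real"
  shows "(\<Sum>xs\<in>{xs. set xs \<subseteq> A \<and> length xs = Suc n}. F xs)
       = (\<Sum>x\<in>A. \<Sum>xs\<in>{xs. set xs \<subseteq> A \<and> length xs = n}. F (x#xs))"
proof -
  have inj: "inj_on (\<lambda>(xs, n). n#xs) ({xs. set xs \<subseteq> A \<and> length xs = n} \<times> A)"
    by (auto simp: inj_on_def)
  have "(\<Sum>xs\<in>{xs. set xs \<subseteq> A \<and> length xs = Suc n}. F xs)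
      = sum (F \<circ> (\<lambda>(xs, n). n#xs)) ({xs. set xs \<subseteq> A \<and> length xs = n} \<times> A)"
    unfolding lists_length_Suc_eq by (rule sum.reindex[OF inj])
  also have "\<dots> = (\<Sum>(xs,x)\<in>{xs. set xs \<subseteq> A \<and> length xs = n} \<times> A. F (x#xs))"
    by (rule sum.cong) auto
  also have "\<dots> = (\<Sum>xs\<in>{xs. set xs \<subseteq> A \<and> length xs = n}. \<Sum>x\<in>A. F (x#xs))"
    by (rule sum.cartesian_product[symmetric])
  also have "\<dots> = (\<Sum>x\<in>A. \<Sum>xs\<in>{xs. set xs \<subseteq> A \<and> length xs = n}. F (x#xs))"
    by (rule sum.swap)
  finally show ?thesis .
qed

lemma lists_0: "{xs. set xs \<subseteq> A \<and> length xs = 0} = {[]}" by auto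

lemma P_nn:
  assumes "\<And>x. x \<in> A \<Longrightarrow> 0 \<le> (p::_ \<Rightarrow> real) x" "set xs \<subseteq> A"
  shows "0 \<le> prod_list (map p xs)"
  by (rule prod_list_nonneg) (use assms in auto)

lemma P_sum:
  assumes nn: "\<And>x. x \<in> A \<Longrightarrow> 0 \<le> (p::_ \<Rightarrow> real) x" and s1: "(\<Sum>x\<in>A. p x) = 1"
  shows "(\<Sum>xs\<in>{xs. set xs \<subseteq> A \<and> length xs = n}. prod_list (map p xs)) = 1"
proof (induction n)
  case 0 then show ?case unfolding lists_0 by simp
next
  case (Suc n)
  have "(\<Sum>xs\<in>{xs. set xs \<subseteq> A \<and> length xs = Suc n}. prod_list (map p xs))
     = (\<Sum>x\<in>A. \<Sum>xs\<in>{xs. set xs \<subseteq> A \<and> length xs = n}. p x * prod_list (map p xs))"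
    unfolding sum_lists_Suc by simp
  also have "\<dots> = (\<Sum>x\<in>A. p x)" by (simp add: sum_distrib_left[symmetric] Suc.IH)
  finally show ?case using s1 by simp
qed

lemma P_ent:
  assumes nn: "\<And>x. x \<in> A \<Longrightarrow> 0 \<le> (p::_ \<Rightarrow> real) x" and s1: "(\<Sum>x\<in>A. p x) = 1"
  shows "(\<Sum>xs\<in>{xs. set xs \<subseteq> A \<and> length xs = n}. hh (prod_list (map p xs)))
         = real n * (\<Sum>x\<in>A. hh (p x))"
proof (induction n)
  case 0 then show ?case unfolding lists_0 by simp
next
  case (Suc n)
  let ?L = "{xs. set xs \<subseteq> A \<and> length xs = n}"
  have "(\<Sum>xs\<in>{xs. set xs \<subseteq> A \<and> length xs = Suc n}. hh (prod_list (map p xs)))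
     = (\<Sum>x\<in>A. \<Sum>xs\<in>?L. hh (p x * prod_list (map p xs)))"
    unfolding sum_lists_Suc by simp
  also have "\<dots> = (\<Sum>x\<in>A. \<Sum>xs\<in>?L. prod_list (map p xs) * hh (p x) + p x * hh (prod_list (map p xs)))"
    by (intro sum.cong refl hh_mult) (use nn P_nn[OF nn] in auto)
  also have "\<dots> = (\<Sum>x\<in>A. (\<Sum>xs\<in>?L. prod_list (map p xs)) * hh (p x) + p x * (\<Sum>xs\<in>?L. hh (prod_list (map p xs))))"
    by (simp add: sum.distrib sum_distrib_left sum_distrib_right)
  also have "\<dots> = (\<Sum>x\<in>A. hh (p x) + p x * (real n * (\<Sum>x\<in>A. hh (p x))))"
    using P_sum[OF nn s1, of n] Suc.IH by simp
  also have "\<dots> = (\<Sum>x\<in>A. hh (p x)) + (\<Sum>x\<in>A. p x) * (real n * (\<Sum>x\<in>A. hh (p x)))"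
    by (simp add: sum.distrib sum_distrib_right)
  also have "\<dots> = real (Suc n) * (\<Sum>x\<in>A. hh (p x))" using s1 by (simp add: algebra_simps)
  finally show ?case .
qed

lemma carrier_eq:
  "bct_power_carrier D N = {xs. set xs \<subseteq> {..<D} \<and> length xs = N} \<times> {ss::bool list. set ss \<subseteq> UNIV \<and> length ss = N - 1}"
  unfolding bct_power_carrier_def by auto

lemma card_B: "card {ss::bool list. set ss \<subseteq> UNIV \<and> length ss = m} = 2 ^ m"
proof -
  have "card {ss::bool list. set ss \<subseteq> UNIV \<and> length ss = m} = card (UNIV::bool set) ^ m"
    by (rule card_lists_length_eq) simp
  then show ?thesis by simp
qed

lemma card_B': "card {ss::bool list. length ss = m} = 2 ^ m"
  using card_B[of m] by simp

lemma fin_B: "finite {ss::bool list. set ss \<subseteq> UNIV \<and> length ss = m}"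
  by (rule finite_lists_length_eq) simp

lemma bct_facts:
  assumes det: "deterministic_state {..<D} p"
  shows "finite (bct_power_carrier D N)"
    and "deterministic_state (bct_power_carrier D N) (bct_power p N)"
    and "N \<ge> 1 \<Longrightarrow> shannon (bct_power_carrier D N) (bct_power p N)
            = real N * shannon {..<D} p + (real N - 1)"
proof -
  let ?L = "{xs. set xs \<subseteq> {..<D} \<and> length xs = N}"
  let ?B = "{ss::bool list. set ss \<subseteq> UNIV \<and> length ss = N - 1}"
  define w :: real where "w = (1/2) ^ (N - 1)"
  have nn: "\<And>x. x \<in> {..<D} \<Longrightarrow> 0 \<le> p x" and s1: "(\<Sum>x\<in>{..<D}. p x) = 1"
    using det unfolding deterministic_state_def by auto
  have fL: "finite ?L" by (rule finite_lists_length_eq) simp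
  show fin: "finite (bct_power_carrier D N)" unfolding carrier_eq using fL fin_B by simp
  have w0: "0 \<le> w" unfolding w_def by simp
  have w2: "2 ^ (N - 1) * w = 1" unfolding w_def by (simp add: power_mult_distrib[symmetric])
  have bp: "bct_power p N (xs, ss) = prod_list (map p xs) * w" for xs ss
    unfolding bct_power_def w_def by simp
  have bp': "bct_power p N x = prod_list (map p (fst x)) * w" for x
    by (cases x) (simp only: bp fst_conv)
  have sumC: "(\<Sum>x\<in>bct_power_carrier D N. G (bct_power p N x))
      = (\<Sum>xs\<in>?L. 2 ^ (N - 1) * G (prod_list (map p xs) * w))" for G :: "real \<Rightarrow> real"
  proof -
    have "(\<Sum>x\<in>bct_power_carrier D N. G (bct_power p N x)) = (\<Sum>(xs,ss)\<in>?L \<times> ?B. G (prod_list (map p xs) * w))"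
      unfolding carrier_eq by (rule sum.cong[OF refl]) (simp only: bp' case_prod_beta)
    also have "\<dots> = (\<Sum>xs\<in>?L. \<Sum>ss\<in>?B. G (prod_list (map p xs) * w))"
      by (rule sum.cartesian_product[symmetric])
    also have "\<dots> = (\<Sum>xs\<in>?L. 2 ^ (N - 1) * G (prod_list (map p xs) * w))"
      by (simp add: card_B' del: One_nat_def)
    finally show ?thesis .
  qed
  show "deterministic_state (bct_power_carrier D N) (bct_power p N)"
    unfolding deterministic_state_def
  proof (intro conjI ballI)
    fix x assume "x \<in> bct_power_carrier D N"
    then obtain xs ss where x: "x = (xs, ss)" "set xs \<subseteq> {..<D}" unfolding carrier_eq by auto
    show "0 \<le> bct_power p N x" unfolding x bp using P_nn[OF nn x(2)] w0 by simp
  next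
    have "(\<Sum>x\<in>bct_power_carrier D N. bct_power p N x) = (\<Sum>x\<in>bct_power_carrier D N. id (bct_power p N x))"
      by simp
    also have "\<dots> = (\<Sum>xs\<in>?L. 2 ^ (N - 1) * (prod_list (map p xs) * w))" unfolding sumC by simp
    also have "\<dots> = 2 ^ (N - 1) * w * (\<Sum>xs\<in>?L. prod_list (map p xs))"
      by (simp add: sum_distrib_left sum_distrib_right algebra_simps)
    also have "\<dots> = 1" using w2 P_sum[OF nn s1, of N] by simp
    finally show "(\<Sum>x\<in>bct_power_carrier D N. bct_power p N x) = 1" .
  qed
  assume N1: "N \<ge> 1"
  have hw: "2 ^ (N - 1) * hh w = - real (N - 1)"
  proof -
    have "log 2 w = - real (N - 1)" unfolding w_def by (simp add: log_nat_power log_divide)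
    then show ?thesis unfolding hh_def using w2 by (metis mult.assoc mult_1 mult.commute)
  qed
  have "(\<Sum>x\<in>bct_power_carrier D N. hh (bct_power p N x))
      = (\<Sum>xs\<in>?L. 2 ^ (N - 1) * hh (prod_list (map p xs) * w))" by (rule sumC)
  also have "\<dots> = (\<Sum>xs\<in>?L. 2 ^ (N - 1) * (w * hh (prod_list (map p xs)) + prod_list (map p xs) * hh w))"
    by (intro sum.cong refl arg_cong[where f="\<lambda>t. 2 ^ (N - 1) * t"] hh_mult w0) (use P_nn[of "{..<D}" p, OF nn] in auto)
  also have "\<dots> = (2 ^ (N - 1) * w) * (\<Sum>xs\<in>?L. hh (prod_list (map p xs)))
                 + (2 ^ (N - 1) * hh w) * (\<Sum>xs\<in>?L. prod_list (map p xs))"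
    by (simp add: sum.distrib sum_distrib_left algebra_simps)
  also have "\<dots> = real N * (\<Sum>x\<in>{..<D}. hh (p x)) - real (N - 1)"
    using w2 hw P_sum[OF nn s1, of N] P_ent[OF nn s1, of N] by simp
  finally show "shannon (bct_power_carrier D N) (bct_power p N) = real N * shannon {..<D} p + (real N - 1)"
    unfolding shannon_hh using N1 by (simp add: of_nat_diff algebra_simps)
qed

theorem proposition4:
  fixes D :: nat and p :: "nat \<Rightarrow> real" and k :: nat
  assumes "D > 1"
    and "deterministic_state {..<D} p"
    and "k \<in> {1, 2, 3}"
  shows "S_reg k D p = ereal (S k {..<D} p + 1)
       \<and> S k {..<D} p + 1 = shannon {..<D} p + 1"
proof -
  note det = assms(2) and k = assms(3)
  have S0: "S k {..<D} p = shannon {..<D} p" by (rule S_eq[OF _ det k]) simp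
  let ?H = "shannon {..<D} p"
  have ev: "\<forall>\<^sub>F N in sequentially. ereal (?H + 1 - 1 / real N)
          = ereal (S k (bct_power_carrier D N) (bct_power p N) / real N)"
  proof (rule eventually_sequentiallyI[of 1])
    fix N :: nat assume N: "N \<ge> 1"
    have "S k (bct_power_carrier D N) (bct_power p N) = real N * ?H + (real N - 1)"
      using S_eq[OF bct_facts(1)[OF det] bct_facts(2)[OF det] k] bct_facts(3)[OF det N] by simp
    moreover have "real N > 0" using N by simp
    ultimately show "ereal (?H + 1 - 1 / real N)
          = ereal (S k (bct_power_carrier D N) (bct_power p N) / real N)"
      by (simp add: field_simps)
  qed
  have "((\<lambda>N. ereal (?H + 1 - 1 / real N)) \<longlongrightarrow> ereal (?H + 1 - 0)) sequentially"
    by (intro tendsto_ereal tendsto_diff tendsto_const lim_1_over_n)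
  then have "((\<lambda>N. ereal (S k (bct_power_carrier D N) (bct_power p N) / real N)) \<longlongrightarrow> ereal (?H + 1)) sequentially"
    using tendsto_cong[OF ev] by simp
  then have "S_reg k D p = ereal (?H + 1)"
    unfolding S_reg_def by (intro lim_imp_Limsup) simp_all
  then show ?thesis using S0 by simp
qed

end
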